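(* Let $D^*=B(0,1)\setminus\{0\}\subseteq\mathbb{C}$ be the punctured unit disc. Then $D^*$ has the property $\widetilde{\Omega}_\zeta$ for every $\zeta\in D^*$, but the Fréchet space $\mathcal{O}(D^* )$ does not have the property $\widetilde{\Omega}$.
   Context: $\mathcal{O}(M)$ denotes the Fréchet space of holomorphic functions on $M$ with the compact-open topology. Property $\widetilde{\Omega}$ of a Fréchet space $\mathcal{X}$ with an increasing fundamental system of seminorms and closed unit balls $\mathcal{U}_k$: for every $k_0$ there exist $k_1$ and $\lambda>0$ such that for every $k>k_1$ there is $C>0$ with $\mathcal{U}_{k_1}\subseteq\frac{C}{r}\mathcal{U}_{k_0}+r^\lambda\mathcal{U}_k$ for all $r>0$ (a linear topological invariant). Property $\widetilde{\Omega}_z$ of a Stein manifold $M$ at $z$: for an increasing generating norm system of $\mathcal{O}(M)$ with unit balls $\mathcal{U}_k$, there is a coordinate ball $B(z;\varepsilon)\subset\subset M$ such that with $\mathcal{U}_0=\{f\in\mathcal{O}(M):\sup_{B(z;\varepsilon)}|f|\le1\}$: $\exists k_1,\lambda>0\ \forall k>k_1\ \exists C>0$ with $\mathcal{U}_{k_1}\subseteq\frac{C}{r}\mathcal{U}_0+r^\lambda\mathcal{U}_k$ for all $r>0$. *)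

theory Defs
  imports "HOL-Analysis.Analysis"
begin

text \<open>Elements are represented by total functions holomorphic on M; all seminorms considered
  below are continuous for the compact-open topology and hence only depend on values on M.\<close>
definition holo_space :: "complex set \<Rightarrow> (complex \<Rightarrow> complex) set" where
  "holo_space M = {f. f holomorphic_on M}"

definition seminorm_on :: "complex set \<Rightarrow> ((complex \<Rightarrow> complex) \<Rightarrow> real) \<Rightarrow> bool" where
  "seminorm_on M p \<longleftrightarrow>
     (\<forall>f\<in>holo_space M. 0 \<le> p f) \<and>
     (\<forall>f\<in>holo_space M. \<forall>g\<in>holo_space M. p (\<lambda>z. f z + g z) \<le> p f + p g) \<and>
     (\<forall>f\<in>holo_space M. \<forall>c::complex. p (\<lambda>z. c * f z) = cmod c * p f)"

text \<open>An increasing fundamental system of (continuous) seminorms for the compact-open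
  topology on O(M).\<close>
definition fund_seminorm_sys :: "complex set \<Rightarrow> (nat \<Rightarrow> (complex \<Rightarrow> complex) \<Rightarrow> real) \<Rightarrow> bool" where
  "fund_seminorm_sys M p \<longleftrightarrow>
     (\<forall>k. seminorm_on M (p k)) \<and>
     (\<forall>k. \<forall>f\<in>holo_space M. p k f \<le> p (Suc k) f) \<and>
     (\<forall>k. \<exists>K C. compact K \<and> K \<subseteq> M \<and>
          (\<forall>f\<in>holo_space M. (\<forall>z\<in>K. cmod (f z) \<le> 1) \<longrightarrow> p k f \<le> C)) \<and>
     (\<forall>K. compact K \<and> K \<subseteq> M \<longrightarrow> (\<exists>k C.
          \<forall>f\<in>holo_space M. p k f \<le> 1 \<longrightarrow> (\<forall>z\<in>K. cmod (f z) \<le> C)))"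

definition fund_norm_sys :: "complex set \<Rightarrow> (nat \<Rightarrow> (complex \<Rightarrow> complex) \<Rightarrow> real) \<Rightarrow> bool" where
  "fund_norm_sys M p \<longleftrightarrow> fund_seminorm_sys M p \<and>
     (\<forall>k. \<forall>f\<in>holo_space M. p k f = 0 \<longrightarrow> (\<forall>z\<in>M. f z = 0))"

text \<open>Property Omega-tilde of O(M), expressed with respect to the seminorm system p
  (unit balls U_k = {f. p k f \<le> 1}); note (C/r) U_k0 = {g. p k0 g \<le> C/r} for C, r > 0.\<close>
definition omega_tilde_wrt :: "complex set \<Rightarrow> (nat \<Rightarrow> (complex \<Rightarrow> complex) \<Rightarrow> real) \<Rightarrow> bool" where
  "omega_tilde_wrt M p \<longleftrightarrow>
     (\<forall>k0. \<exists>k1. \<exists>lam>0. \<forall>k>k1. \<exists>C>0. \<forall>r>0.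
        \<forall>f\<in>holo_space M. p k1 f \<le> 1 \<longrightarrow>
          (\<exists>g\<in>holo_space M. \<exists>h\<in>holo_space M. f = (\<lambda>z. g z + h z) \<and>
             p k0 g \<le> C / r \<and> p k h \<le> r powr lam))"

text \<open>Property Omega-tilde at z of M, with respect to the norm system p: U_0 is the unit
  ball of the sup norm over a coordinate ball B(z;eps) compactly contained in M.\<close>
definition omega_tilde_at_wrt :: "complex set \<Rightarrow> complex \<Rightarrow> (nat \<Rightarrow> (complex \<Rightarrow> complex) \<Rightarrow> real) \<Rightarrow> bool" where
  "omega_tilde_at_wrt M z p \<longleftrightarrow>
     (\<exists>eps>0. cball z eps \<subseteq> M \<and>
       (\<exists>k1. \<exists>lam>0. \<forall>k>k1. \<exists>C>0. \<forall>r>0.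
          \<forall>f\<in>holo_space M. p k1 f \<le> 1 \<longrightarrow>
            (\<exists>g\<in>holo_space M. \<exists>h\<in>holo_space M. f = (\<lambda>w. g w + h w) \<and>
               (\<forall>w\<in>ball z eps. cmod (g w) \<le> C / r) \<and> p k h \<le> r powr lam)))"

end

theory Submission
  imports Defs "HOL-Complex_Analysis.Complex_Analysis"
begin


lemma holo_scale: "f \<in> holo_space M \<Longrightarrow> (\<lambda>z. c * f z) \<in> holo_space M"
  unfolding holo_space_def by (auto intro!: holomorphic_intros)

lemma semi_scale:
  assumes "seminorm_on M p" "f \<in> holo_space M"
  shows "p (\<lambda>z. c * f z) = cmod c * p f"
  using assms unfolding seminorm_on_def by blast

lemma semi_zero:
  assumes "seminorm_on M p" shows "p (\<lambda>z. 0) = 0"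
proof -
  have z: "(\<lambda>z. 0::complex) \<in> holo_space M" unfolding holo_space_def by auto
  show ?thesis using semi_scale[OF assms z, of 0] by simp
qed

lemma fs_mono:
  assumes "fund_seminorm_sys M p" "f \<in> holo_space M" "k \<le> k'"
  shows "p k f \<le> p k' f"
proof -
  have st: "\<And>j. p j f \<le> p (Suc j) f" using assms(1,2) unfolding fund_seminorm_sys_def by blast
  show ?thesis using assms(3)
  proof (induction k' rule: dec_induct)
    case (step n) then show ?case using st[of n] by linarith
  qed simp
qed

lemma fs_upper:
  assumes "fund_seminorm_sys M p"
  obtains K C where "compact K" "K \<subseteq> M" "C \<ge> 0"
    "\<And>f B. f \<in> holo_space M \<Longrightarrow> B > 0 \<Longrightarrow> (\<forall>z\<in>K. cmod (f z) \<le> B) \<Longrightarrow> p k f \<le> C * B"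
proof -
  have H3: "\<forall>k. \<exists>K C. compact K \<and> K \<subseteq> M \<and>
          (\<forall>f\<in>holo_space M. (\<forall>z\<in>K. cmod (f z) \<le> 1) \<longrightarrow> p k f \<le> C)"
    using assms unfolding fund_seminorm_sys_def by (elim conjE)
  obtain K C where K: "compact K" "K \<subseteq> M"
    and H: "\<forall>f\<in>holo_space M. (\<forall>z\<in>K. cmod (f z) \<le> 1) \<longrightarrow> p k f \<le> C"
    using spec[OF H3, of k] by blast
  have sn: "seminorm_on M (p k)" using assms unfolding fund_seminorm_sys_def by blast
  have z: "(\<lambda>z. 0::complex) \<in> holo_space M" unfolding holo_space_def by auto
  have "p k (\<lambda>z. 0) \<le> C" using H z by simp
  then have C0: "C \<ge> 0" using semi_zero[OF sn] by simp
  show ?thesis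
  proof (rule that[OF K C0])
    fix f B assume f: "f \<in> holo_space M" and B: "B > 0" and b: "\<forall>z\<in>K. cmod (f z) \<le> B"
    have fB: "(\<lambda>z. (1/B) * f z) \<in> holo_space M" using holo_scale f by blast
    have "\<forall>z\<in>K. cmod ((\<lambda>z. (1/B) * f z) z) \<le> 1"
    proof
      fix z assume "z \<in> K"
      then have "cmod (f z) \<le> B" using b by blast
      then have "cmod (f z) / B \<le> 1" using B by simp
      then show "cmod ((\<lambda>z. (1/B) * f z) z) \<le> 1" using B by (simp add: norm_mult norm_divide)
    qed
    then have "p k (\<lambda>z. (1/B) * f z) \<le> C" using mp[OF bspec[OF H fB]] by simp
    then have "p k f / B \<le> C" using semi_scale[OF sn f, of "1/B"] B by (simp add: norm_divide)
    then show "p k f \<le> C * B" using B by (simp add: divide_le_eq)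
  qed
qed

lemma fs_lower:
  assumes "fund_seminorm_sys M p" "compact K" "K \<subseteq> M"
  obtains k C where "C > 0"
    "\<And>f s z. f \<in> holo_space M \<Longrightarrow> s > 0 \<Longrightarrow> p k f \<le> s \<Longrightarrow> z \<in> K \<Longrightarrow> cmod (f z) \<le> C * s"
proof -
  have H4: "\<forall>K. compact K \<and> K \<subseteq> M \<longrightarrow> (\<exists>k C.
          \<forall>f\<in>holo_space M. p k f \<le> 1 \<longrightarrow> (\<forall>z\<in>K. cmod (f z) \<le> C))"
    using assms(1) unfolding fund_seminorm_sys_def by (elim conjE)
  obtain k C where
    H: "\<forall>f\<in>holo_space M. p k f \<le> 1 \<longrightarrow> (\<forall>z\<in>K. cmod (f z) \<le> C)"
    using spec[OF H4, of K] assms(2,3) by blast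
  have sn: "seminorm_on M (p k)" using assms unfolding fund_seminorm_sys_def by blast
  show ?thesis
  proof (rule that[of "max C 1" k])
    fix f s z assume f: "f \<in> holo_space M" and s: "s > 0" and ps: "p k f \<le> s" and z: "z \<in> K"
    have fs: "(\<lambda>z. (1/s) * f z) \<in> holo_space M" using holo_scale f by blast
    have "p k (\<lambda>z. (1/s) * f z) = p k f / s" using semi_scale[OF sn f, of "1/s"] s by (simp add: norm_divide)
    also have "\<dots> \<le> 1" using ps s by simp
    finally have "cmod ((\<lambda>z. (1/s) * f z) z) \<le> C" using H fs z by blast
    then have "cmod (f z) / s \<le> C" using s by (simp add: norm_mult norm_divide)
    then have "cmod (f z) \<le> C * s" using s by (simp add: divide_le_eq)
    also have "\<dots> \<le> max C 1 * s" using s by (intro mult_right_mono) auto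
    finally show "cmod (f z) \<le> max C 1 * s" .
  qed auto
qed



lemma circ_int:
  assumes "\<phi> holomorphic_on ball 0 1 - {0}" "0 < s" "s < 1"
  shows "(\<lambda>z. \<phi> z * z^n) contour_integrable_on circlepath 0 s"
proof -
  have h: "(\<lambda>z. \<phi> z * z^n) holomorphic_on ball 0 1 - {0}" using assms(1) by (intro holomorphic_intros)
  have "cball (0::complex) s \<subseteq> ball 0 1" using assms by (subst cball_subset_ball_iff) simp
  then show ?thesis by (rule contour_integral_circlepath_eq(1)[OF open_ball h assms(2) order_refl])
qed

lemma circ_eq:
  assumes "\<phi> holomorphic_on ball 0 1 - {0}" "0 < s1" "s1 < 1" "0 < s2" "s2 < 1"
  shows "contour_integral (circlepath 0 s1) (\<lambda>z. \<phi> z * z^n) = contour_integral (circlepath 0 s2) (\<lambda>z. \<phi> z * z^n)"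
proof -
  have h: "(\<lambda>z. \<phi> z * z^n) holomorphic_on ball 0 1 - {0}" using assms(1) by (intro holomorphic_intros)
  have c1: "cball (0::complex) s1 \<subseteq> ball 0 1" using assms by (subst cball_subset_ball_iff) simp
  have c2: "cball (0::complex) s2 \<subseteq> ball 0 1" using assms by (subst cball_subset_ball_iff) simp
  show ?thesis
  proof (cases "s1 \<le> s2")
    case True show ?thesis
      by (rule contour_integral_circlepath_eq(3)[OF open_ball h assms(2) True c2, symmetric])
  next
    case False then have "s2 \<le> s1" by simp
    then show ?thesis
      by (rule contour_integral_circlepath_eq(3)[OF open_ball h assms(4) _ c1])
  qed
qed



lemma circ_bound:
  assumes "\<phi> holomorphic_on ball 0 1 - {0}" "0 < s" "s < 1" "B \<ge> 0"
    "\<And>z. cmod z = s \<Longrightarrow> cmod (\<phi> z) \<le> B"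
  shows "cmod (contour_integral (circlepath 0 s) (\<lambda>z. \<phi> z * z^n)) \<le> B * s^n * (2*pi * s)"
proof -
  have i: "((\<lambda>z. \<phi> z * z^n) has_contour_integral contour_integral (circlepath 0 s) (\<lambda>z. \<phi> z * z^n)) (circlepath 0 s)"
    using has_contour_integral_integral[OF circ_int[OF assms(1-3)]] .
  have b0: "0 \<le> B * s^n" using assms(2,4) by simp
  have bx: "cmod (\<phi> x * x ^ n) \<le> B * s ^ n" if "cmod (x - 0) = s" for x
  proof -
    have "cmod (\<phi> x) \<le> B" using assms(5)[of x] that by simp
    moreover have "cmod (x^n) = s^n" using that by (simp add: norm_power)
    ultimately show ?thesis unfolding norm_mult using assms(2)
      by (simp add: mult_right_mono)
  qed
  show ?thesis by (rule has_contour_integral_bound_circlepath[OF i b0 assms(2) bx])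
qed



lemma circ_f:
  assumes "0 < s"
  shows "contour_integral (circlepath 0 s) (\<lambda>z. (c / z^(n+1)) * z^n) = c * (2 * of_real pi * \<i>)"
proof -
  have e: "(\<lambda>z. (c / z^(n+1)) * z^n) = (\<lambda>z. c / (z - 0))"
  proof
    fix z :: complex show "c / z^(n+1) * z^n = c / (z - 0)"
    proof (cases "z = 0")
      case False then show ?thesis by (simp add: divide_simps)
    qed simp
  qed
  have "((\<lambda>z. c / (z - 0)) has_contour_integral 2 * of_real pi * \<i> * c) (circlepath 0 s)"
    using Cauchy_integral_circlepath_simple[of "\<lambda>u. c" 0 s 0] assms by simp
  then show ?thesis unfolding e by (simp add: contour_integral_unique mult.commute)
qed



lemma part2:
  assumes fs: "fund_seminorm_sys M p" and M: "M = ball 0 1 - {0}"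
  shows "\<not> omega_tilde_wrt M p"
proof
  assume om: "omega_tilde_wrt M p"
  have holM: "\<And>f. f \<in> holo_space M \<Longrightarrow> f holomorphic_on ball 0 1 - {0}"
    using M unfolding holo_space_def by auto
  have sph: "\<And>s. 0 < s \<Longrightarrow> s < 1 \<Longrightarrow> sphere (0::complex) s \<subseteq> M" using M by auto
  have sph2: "sphere (0::complex) (1/2) \<subseteq> M" using sph[of "1/2"] by simp
  obtain k0 A where A: "A > 0" and HA: "\<And>f s z. f \<in> holo_space M \<Longrightarrow> s > 0 \<Longrightarrow> p k0 f \<le> s
      \<Longrightarrow> z \<in> sphere 0 (1/2) \<Longrightarrow> cmod (f z) \<le> A * s"
    using fs_lower[OF fs compact_sphere sph2] by metis
  from om obtain k1 lam where lam: "lam > 0" and H1: "\<forall>k>k1. \<exists>C>0. \<forall>r>0.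
        \<forall>f\<in>holo_space M. p k1 f \<le> 1 \<longrightarrow>
          (\<exists>g\<in>holo_space M. \<exists>h\<in>holo_space M. f = (\<lambda>z. g z + h z) \<and>
             p k0 g \<le> C / r \<and> p k h \<le> r powr lam)"
    using spec[OF om[unfolded omega_tilde_wrt_def], of k0] by blast
  obtain K1 B0 where K1: "compact K1" "K1 \<subseteq> M" and B0: "B0 \<ge> 0"
    and HB: "\<And>f B. f \<in> holo_space M \<Longrightarrow> B > 0 \<Longrightarrow> (\<forall>z\<in>K1. cmod (f z) \<le> B) \<Longrightarrow> p k1 f \<le> B0 * B"
    using fs_upper[OF fs] by metis
  have "0 \<notin> K1" using K1 M by auto
  then obtain d where d: "d > 0" "\<forall>x\<in>K1. d \<le> dist 0 x"
    using separate_point_closed[OF compact_imp_closed[OF K1(1)]] by blast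
  define a where "a = min d (1/2)"
  have a: "a > 0" "a \<le> 1/2" using d by (auto simp: a_def)
  have aK: "\<And>z. z \<in> K1 \<Longrightarrow> a \<le> cmod z" using d unfolding a_def by fastforce
  define \<rho> where "\<rho> = a * (2*a) powr lam / 2"
  have pw: "(2*a) powr lam \<le> 1" using a lam by (intro powr_le1) auto
  have pw0: "(2*a) powr lam > 0" using a by simp
  have "a * (2*a) powr lam \<le> a * 1" using pw a by (intro mult_left_mono) auto
  then have ax: "a * (2*a) powr lam \<le> a" by simp
  have "\<rho> > 0" using a pw0 unfolding \<rho>_def by simp
  moreover have "\<rho> < 1" using ax a unfolding \<rho>_def by linarith
  ultimately have \<rho>: "\<rho> > 0" "\<rho> < 1" by auto
  obtain k' Ak where Ak: "Ak > 0" and HAk: "\<And>f s z. f \<in> holo_space M \<Longrightarrow> s > 0 \<Longrightarrow> p k' f \<le> s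
      \<Longrightarrow> z \<in> sphere 0 \<rho> \<Longrightarrow> cmod (f z) \<le> Ak * s"
    using fs_lower[OF fs compact_sphere sph[OF \<rho>]] by metis
  define k where "k = max (Suc k1) k'"
  have "k > k1" "k' \<le> k" unfolding k_def by auto
  then obtain C where C: "C > 0" and HC: "\<forall>r>0.
        \<forall>f\<in>holo_space M. p k1 f \<le> 1 \<longrightarrow>
          (\<exists>g\<in>holo_space M. \<exists>h\<in>holo_space M. f = (\<lambda>z. g z + h z) \<and>
             p k0 g \<le> C / r \<and> p k h \<le> r powr lam)"
    using H1 by blast
  define B1 where "B1 = B0 + 1"
  have B1: "B1 \<ge> 1" using B0 by (simp add: B1_def)
  define KK where "KK = (2*C*A*B1) powr lam"
  obtain n where n: "2*B1*Ak*KK < 2^n" using real_arch_pow[of 2 "2*B1*Ak*KK"] by auto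
  define c where "c = a^(n+1)/B1"
  have c: "c > 0" using a B1 by (simp add: c_def)
  define f where "f = (\<lambda>z::complex. of_real c / z^(n+1))"
  have "(\<lambda>z::complex. of_real c / z^(n+1)) holomorphic_on ball 0 1 - {0}" by (intro holomorphic_intros) auto
  then have fh: "f \<in> holo_space M" unfolding f_def holo_space_def M by simp
  have "p k1 f \<le> B0 * (1/B1)"
  proof (rule HB[OF fh])
    show "1/B1 > 0" using B1 by simp
    show "\<forall>z\<in>K1. cmod (f z) \<le> 1/B1"
    proof
      fix z assume z: "z \<in> K1"
      have az: "a \<le> cmod z" using aK[OF z] .
      have "a^(n+1) \<le> cmod z^(n+1)" using az a by (intro power_mono) auto
      moreover have "0 < cmod z^(n+1) * a^(n+1)" using az a by (intro mult_pos_pos zero_less_power) auto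
      ultimately have "c / cmod z^(n+1) \<le> c / a^(n+1)" using c by (intro divide_left_mono) auto
      also have "\<dots> = 1/B1" using a unfolding c_def by simp
      finally show "cmod (f z) \<le> 1/B1" using c unfolding f_def by (simp add: norm_divide norm_power norm_mult)
    qed
  qed
  moreover have "B0 * (1/B1) \<le> 1" using B0 unfolding B1_def by (simp add: field_simps)
  ultimately have pf: "p k1 f \<le> 1" by linarith
  define r where "r = 2*C*A*B1*(1/(2*a))^(n+1)"
  have r: "r > 0" using C A B1 a by (simp add: r_def)
  obtain g h where g: "g \<in> holo_space M" and h: "h \<in> holo_space M" and fgh: "f = (\<lambda>z. g z + h z)"
    and pg: "p k0 g \<le> C / r" and ph: "p k h \<le> r powr lam"
    using bspec[OF spec[OF HC, of r, THEN mp, OF r] fh, THEN mp, OF pf] by blast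
  have gh: "g holomorphic_on ball 0 1 - {0}" "h holomorphic_on ball 0 1 - {0}" using g h holM by auto
  define I where "I = (\<lambda>s \<phi>. contour_integral (circlepath 0 s) (\<lambda>z::complex. \<phi> z * z^n))"
  have If: "I (1/2) f = of_real c * (2 * of_real pi * \<i>)" unfolding I_def f_def by (rule circ_f) simp
  have "I (1/2) f = I (1/2) g + I (1/2) h"
  proof -
    have "(\<lambda>z. f z * z^n) = (\<lambda>z. g z * z^n + h z * z^n)" unfolding fgh by (simp add: algebra_simps)
    then show ?thesis unfolding I_def
      using contour_integral_add[OF circ_int[OF gh(1)] circ_int[OF gh(2)], of "1/2" n] by simp
  qed
  moreover have "I (1/2) h = I \<rho> h" unfolding I_def by (rule circ_eq[OF gh(2)]) (use \<rho> in auto)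
  ultimately have eq: "of_real c * (2 * of_real pi * \<i>) = I (1/2) g + I \<rho> h" using If by simp
  have bg: "cmod (I (1/2) g) \<le> A * (C/r) * (1/2)^n * (2*pi * (1/2))" unfolding I_def
  proof (rule circ_bound[OF gh(1)])
    show "0 \<le> A * (C/r)" using A C r by simp
    fix z :: complex assume "cmod z = 1/2"
    then show "cmod (g z) \<le> A * (C/r)" using HA[OF g _ pg, of z] C r by simp
  qed auto
  have pk': "p k' h \<le> r powr lam" using fs_mono[OF fs h \<open>k' \<le> k\<close>] ph by simp
  have bh: "cmod (I \<rho> h) \<le> Ak * (r powr lam) * \<rho>^n * (2*pi * \<rho>)" unfolding I_def
  proof (rule circ_bound[OF gh(2)])
    show "0 \<le> Ak * (r powr lam)" using Ak by simp
    fix z :: complex assume "cmod z = \<rho>"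
    then show "cmod (h z) \<le> Ak * (r powr lam)" using HAk[OF h _ pk', of z] r by simp
  qed (use \<rho> in auto)
  have "c * (2*pi) = cmod (of_real c * (2 * of_real pi * \<i>))" using c by (simp add: norm_mult)
  also have "\<dots> \<le> cmod (I (1/2) g) + cmod (I \<rho> h)" unfolding eq by (rule norm_triangle_ineq)
  finally have main: "c * (2*pi) \<le> A * (C/r) * (1/2)^n * (2*pi * (1/2)) + Ak * (r powr lam) * \<rho>^n * (2*pi * \<rho>)"
    using bg bh by linarith
  have t1: "A * (C/r) * (1/2)^n * (2*pi * (1/2)) = (c/2) * (2*pi)"
    unfolding r_def c_def using A C a B1 by (simp add: field_simps power_divide)
  have t2: "Ak * (r powr lam) * \<rho>^n * (2*pi * \<rho>) = Ak * KK * (a/2)^(n+1) * (2*pi)"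
  proof -
    define X where "X = 1/(2*a)"
    have X: "X > 0" using a by (simp add: X_def)
    have e1: "((X)^(n+1)) powr lam = (X powr lam)^(n+1)"
    proof -
      have "((X)^(n+1)) powr lam = (X powr (real (n+1))) powr lam" by (simp only: powr_realpow[OF X])
      also have "\<dots> = X powr (real (n+1) * lam)" by (simp add: powr_powr)
      also have "\<dots> = (X powr lam)^(n+1)" using X by (simp only: powr_power[of X lam "n+1"] mult.commute)
      finally show ?thesis .
    qed
    have rX: "r = (2*C*A*B1) * X^(n+1)" unfolding r_def X_def by simp
    have r1: "r powr lam = KK * (X powr lam)^(n+1)"
      unfolding rX KK_def by (simp only: powr_mult e1)
    have q: "X powr lam * (2*a) powr lam = 1"
      using a by (simp add: powr_mult[symmetric] X_def)
    have xr: "X powr lam * \<rho> = a/2" unfolding \<rho>_def using q by (simp add: field_simps)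
    have pp: "(X powr lam)^(n+1) * \<rho>^(n+1) = (a/2)^(n+1)"
      by (simp only: power_mult_distrib[symmetric] xr)
    have "Ak * (r powr lam) * \<rho>^n * (2*pi * \<rho>) = Ak * KK * ((X powr lam)^(n+1) * \<rho>^(n+1)) * (2*pi)"
      unfolding r1 by (simp add: algebra_simps)
    then show ?thesis unfolding pp .
  qed
  define Y where "Y = Ak * KK * (a/2)^(n+1)"
  have m2: "c * (2*pi) \<le> (c/2) * (2*pi) + Y * (2*pi)" using main unfolding t1 t2 Y_def .
  have "(c/2) * (2*pi) \<le> Y * (2*pi)" using m2 by (simp add: algebra_simps)
  then have cY: "c/2 \<le> Y" using pi_gt_zero by (simp add: mult_le_cancel_right)
  define P where "P = a^(n+1)"
  have P: "P > 0" using a by (simp add: P_def)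
  have "c/2 = P * (1/(2*B1))" by (simp add: c_def P_def)
  moreover have "Y = P * (Ak*KK/2^(n+1))" by (simp add: Y_def P_def power_divide)
  ultimately have "P * (1/(2*B1)) \<le> P * (Ak*KK/2^(n+1))" using cY by simp
  then have "1/(2*B1) \<le> Ak*KK/2^(n+1)" using P by (rule mult_left_le_imp_le)
  then have "2^(n+1) \<le> 2*B1*(Ak*KK)" using B1 by (simp add: field_simps)
  moreover have "(2::real)^n \<le> 2^(n+1)" by simp
  moreover have "0 \<le> B1*(Ak*KK)" using B1 Ak by (simp add: KK_def)
  moreover have "2*B1*Ak*KK = 2*(B1*(Ak*KK))" by simp
  ultimately show False using n by linarith
qed



lemma two_pow_log:
  assumes "(r::real) \<ge> 1"
  shows "r \<le> 2 ^ nat \<lceil>log 2 r\<rceil>" "2 ^ nat \<lceil>log 2 r\<rceil> \<le> 2 * r"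
proof -
  define N where "N = nat \<lceil>log 2 r\<rceil>"
  have l0: "log 2 r \<ge> 0" using assms by simp
  have N1: "real N \<ge> log 2 r" unfolding N_def using l0 by linarith
  have N2: "real N \<le> log 2 r + 1" unfolding N_def using l0 by linarith
  have e: "(2::real) ^ N = 2 powr (real N)" by (simp add: powr_realpow)
  have "r = 2 powr (log 2 r)" using assms by simp
  also have "\<dots> \<le> 2 powr (real N)" using N1 by (intro powr_mono) auto
  finally show "r \<le> 2 ^ nat \<lceil>log 2 r\<rceil>" using e N_def by simp
  have "2 powr (real N) \<le> 2 powr (log 2 r + 1)" using N2 by (intro powr_mono) auto
  also have "\<dots> = 2 * r" using assms by (simp add: powr_add)
  finally show "2 ^ nat \<lceil>log 2 r\<rceil> \<le> 2 * r" using e N_def by simp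
qed

lemma lin_pow: "real (N+1) \<le> 2^N"
proof (induction N)
  case (Suc N) then show ?case by simp
qed simp

lemma sum_bound:
  assumes "(T::real) \<ge> 1"
  shows "(\<Sum>m\<le>N. T^m) \<le> (2*T)^N"
proof -
  have "(\<Sum>m\<le>N. T^m) \<le> (\<Sum>m\<le>N. T^N)"
    using assms by (intro sum_mono power_increasing) auto
  also have "\<dots> = real (N+1) * T^N" by simp
  also have "\<dots> \<le> 2^N * T^N" using lin_pow[of N] assms by (intro mult_right_mono) auto
  also have "\<dots> = (2*T)^N" by (simp add: power_mult_distrib)
  finally show ?thesis .
qed

lemma pow_powr:
  assumes "(T::real) > 0"
  shows "(2*T)^N = (2^N) powr (log 2 (2*T))"
proof -
  have "(2::real)^N = 2 powr (real N)" by (simp add: powr_realpow)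
  then have "(2^N) powr (log 2 (2*T)) = 2 powr (real N * log 2 (2*T))" by (simp add: powr_powr)
  also have "\<dots> = (2 powr (log 2 (2*T))) powr (real N)" by (simp add: powr_powr mult.commute)
  also have "\<dots> = (2*T) powr (real N)" using assms by simp
  also have "\<dots> = (2*T)^N" using assms by (simp add: powr_realpow)
  finally show ?thesis by simp
qed



lemma part1:
  assumes fs: "fund_seminorm_sys M p" and M: "M = ball 0 1 - {0}" and \<zeta>: "\<zeta> \<in> M"
  shows "omega_tilde_at_wrt M \<zeta> p"
proof -
  define R where "R = min (cmod \<zeta>) (1 - cmod \<zeta>) / 2"
  have z0: "0 < cmod \<zeta>" "cmod \<zeta> < 1" using \<zeta> M by auto
  have R: "R > 0" "R \<le> 1/4" using z0 unfolding R_def by (auto simp: min_def)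
  have cbR: "cball \<zeta> R \<subseteq> M"
  proof
    fix w assume "w \<in> cball \<zeta> R"
    then have d: "cmod (\<zeta> - w) \<le> R" by (simp add: dist_norm)
    have "cmod \<zeta> \<le> cmod w + cmod (\<zeta> - w)" by (metis norm_triangle_sub add.commute)
    moreover have "cmod w \<le> cmod \<zeta> + cmod (\<zeta> - w)" by (metis norm_triangle_sub norm_minus_commute)
    moreover have "R < cmod \<zeta>" "R < 1 - cmod \<zeta>" using z0 unfolding R_def by (auto simp: min_def)
    ultimately have "0 < cmod w" "cmod w < 1" using d by linarith+
    then show "w \<in> M" using M by auto
  qed
  define eps where "eps = R/2"
  have eps: "eps > 0" using R by (simp add: eps_def)
  have "cball \<zeta> eps \<subseteq> cball \<zeta> R" unfolding eps_def using R by (intro subset_cball) simp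
  then have cbe: "cball \<zeta> eps \<subseteq> M" using cbR by blast
  obtain k1 C1 where C1: "C1 > 0" and HC1: "\<And>f s z. f \<in> holo_space M \<Longrightarrow> s > 0 \<Longrightarrow> p k1 f \<le> s
      \<Longrightarrow> z \<in> cball \<zeta> R \<Longrightarrow> cmod (f z) \<le> C1 * s"
    using fs_lower[OF fs compact_cball cbR] by metis
  define T where "T = 2/R"
  have T: "T \<ge> 1" "T > 0" using R unfolding T_def by (auto simp: field_simps)
  define \<mu> where "\<mu> = log 2 (2*T)"
  have \<mu>: "\<mu> > 0" using T unfolding \<mu>_def by simp
  define lam where "lam = \<mu> + 1"
  have lam: "lam > 0" using \<mu> by (simp add: lam_def)
  have main: "\<forall>k>k1. \<exists>C>0. \<forall>r>0.
          \<forall>f\<in>holo_space M. p k1 f \<le> 1 \<longrightarrow>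
            (\<exists>g\<in>holo_space M. \<exists>h\<in>holo_space M. f = (\<lambda>w. g w + h w) \<and>
               (\<forall>w\<in>ball \<zeta> eps. cmod (g w) \<le> C / r) \<and> p k h \<le> r powr lam)"
  proof (intro allI impI)
    fix k assume "k > k1"
    obtain K Ck where K: "K \<subseteq> M" and Ck: "Ck \<ge> 0" and HK: "\<And>f B. f \<in> holo_space M \<Longrightarrow> B > 0
        \<Longrightarrow> (\<forall>z\<in>K. cmod (f z) \<le> B) \<Longrightarrow> p k f \<le> Ck * B"
      using fs_upper[OF fs, where k=k] by metis
    define r0 where "r0 = max 1 (Ck*C1*2 powr \<mu>)"
    have r0: "r0 \<ge> 1" "Ck*C1*2 powr \<mu> \<le> r0" unfolding r0_def by auto
    show "\<exists>C>0. \<forall>r>0.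
          \<forall>f\<in>holo_space M. p k1 f \<le> 1 \<longrightarrow>
            (\<exists>g\<in>holo_space M. \<exists>h\<in>holo_space M. f = (\<lambda>w. g w + h w) \<and>
               (\<forall>w\<in>ball \<zeta> eps. cmod (g w) \<le> C / r) \<and> p k h \<le> r powr lam)"
    proof (intro exI[of _ "C1*r0"] conjI allI impI ballI)
      show "C1 * r0 > 0" using C1 r0 by simp
      fix r :: real and f :: "complex \<Rightarrow> complex" assume r: "r > 0" and f: "f \<in> holo_space M" and pf: "p k1 f \<le> 1"
      have fb: "\<And>z. z \<in> cball \<zeta> R \<Longrightarrow> cmod (f z) \<le> C1" using HC1[OF f _ pf] by fastforce
      show "\<exists>g\<in>holo_space M. \<exists>h\<in>holo_space M. f = (\<lambda>w. g w + h w) \<and>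
               (\<forall>w\<in>ball \<zeta> eps. cmod (g w) \<le> C1 * r0 / r) \<and> p k h \<le> r powr lam"
      proof (cases "r \<le> r0")
        case True
        have z: "(\<lambda>z. 0::complex) \<in> holo_space M" unfolding holo_space_def by auto
        have sn: "seminorm_on M (p k)" using fs unfolding fund_seminorm_sys_def by blast
        have "\<forall>w\<in>ball \<zeta> eps. cmod (f w) \<le> C1 * r0 / r"
        proof
          fix w assume "w \<in> ball \<zeta> eps"
          then have "w \<in> cball \<zeta> R" using \<open>cball \<zeta> eps \<subseteq> cball \<zeta> R\<close> ball_subset_cball[of \<zeta> eps] by blast
          then have "cmod (f w) \<le> C1" by (rule fb)
          also have "C1 \<le> C1 * r0 / r" using True r C1 by (simp add: field_simps)
          finally show "cmod (f w) \<le> C1 * r0 / r" .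
        qed
        moreover have "p k (\<lambda>z. 0) \<le> r powr lam" using semi_zero[OF sn] by simp
        ultimately show ?thesis by (intro bexI[OF _ f] bexI[OF _ z] conjI) simp_all
      next
        case False
        then have rr: "r > r0" "r \<ge> 1" using r0 by auto
        have fhol: "f holomorphic_on M" using f unfolding holo_space_def by simp
        have "ball \<zeta> R \<subseteq> M" using cbR ball_subset_cball by blast
        then have fhb: "f holomorphic_on ball \<zeta> R" using fhol holomorphic_on_subset by blast
        have fc: "continuous_on (cball \<zeta> R) f"
          using holomorphic_on_imp_continuous_on[OF holomorphic_on_subset[OF fhol cbR]] .
        define d where "d m = (deriv ^^ m) f \<zeta> / fact m" for m
        have dB: "cmod (d m) \<le> C1 / R^m" for m
        proof -
          have "norm ((deriv ^^ m) f \<zeta>) \<le> fact m * C1 / R^m"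
          proof (rule Cauchy_inequality[OF fhb fc R(1)])
            fix x assume "norm (\<zeta> - x) = R"
            then have "x \<in> cball \<zeta> R" by (simp add: dist_norm)
            then show "cmod (f x) \<le> C1" by (rule fb)
          qed
          then show ?thesis unfolding d_def by (simp add: norm_divide field_simps)
        qed
        define N where "N = nat \<lceil>log 2 r\<rceil>"
        have N: "r \<le> 2^N" "2^N \<le> 2*r" using two_pow_log[OF rr(2)] unfolding N_def by auto
        define h where "h = (\<lambda>w. \<Sum>m\<le>N. d m * (w - \<zeta>)^m)"
        define g where "g = (\<lambda>w. f w - h w)"
        have hh: "h \<in> holo_space M" unfolding h_def holo_space_def by (simp add: holomorphic_intros)
        have gh: "g \<in> holo_space M" using f hh unfolding g_def holo_space_def by (simp add: holomorphic_intros)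
        have feq: "f = (\<lambda>w. g w + h w)" unfolding g_def by simp
        have gb: "\<forall>w\<in>ball \<zeta> eps. cmod (g w) \<le> C1 * r0 / r"
        proof
          fix w assume w: "w \<in> ball \<zeta> eps"
          then have wR: "w \<in> ball \<zeta> R" using R unfolding eps_def by auto
          have wd: "cmod (w - \<zeta>) \<le> R/2" using w unfolding eps_def by (simp add: dist_norm norm_minus_commute)
          have s1: "(\<lambda>m. d m * (w - \<zeta>)^m) sums f w"
            unfolding d_def by (rule holomorphic_power_series[OF fhb wR])
          have s2: "(\<lambda>i. d (i + (Suc N)) * (w - \<zeta>)^(i + (Suc N))) sums g w"
            using sums_split_initial_segment[OF s1, of "Suc N"]
            unfolding g_def h_def lessThan_Suc_atMost by simp
          define G where "G i = C1 * (1/2)^(Suc N) * (1/2)^i" for i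
          have sG: "G sums (C1 * (1/2)^(Suc N) * 2)"
            unfolding G_def using sums_mult[OF geometric_sums[of "1/2::real"], of "C1 * (1/2)^(Suc N)"] by simp
          have tb: "cmod (d (i + (Suc N)) * (w - \<zeta>)^(i + (Suc N))) \<le> G i" for i
          proof -
            let ?j = "i + (Suc N)"
            have "cmod (d ?j * (w - \<zeta>)^?j) = cmod (d ?j) * cmod (w - \<zeta>)^?j" by (simp add: norm_mult norm_power)
            also have "\<dots> \<le> (C1 / R^?j) * (R/2)^?j"
              using dB[of ?j] wd R C1 by (intro mult_mono power_mono) auto
            also have "\<dots> = C1 * (1/2)^?j" using R by (simp add: power_divide field_simps)
            also have "\<dots> = G i" unfolding G_def by (simp add: power_add)
            finally show ?thesis .
          qed
          have "cmod (g w) \<le> C1 * (1/2)^(Suc N) * 2"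
            using norm_suminf_le[OF tb sums_summable[OF sG]] sums_unique[OF s2] sums_unique[OF sG] by simp
          also have "\<dots> = C1 / 2^N" by (simp add: power_divide)
          also have "\<dots> \<le> C1 / r" using C1 r N by (intro divide_left_mono) auto
          also have "\<dots> \<le> C1 * r0 / r" using C1 r r0 by (simp add: divide_right_mono)
          finally show "cmod (g w) \<le> C1 * r0 / r" .
        qed
        have hK: "\<forall>z\<in>K. cmod (h z) \<le> C1 * (2*T)^N"
        proof
          fix z assume "z \<in> K"
          then have zM: "z \<in> M" using K by auto
          have "cmod (z - \<zeta>) \<le> cmod z + cmod \<zeta>" by (rule norm_triangle_ineq4)
          then have z2: "cmod (z - \<zeta>) \<le> 2" using zM z0 M by auto
          have "cmod (h z) \<le> (\<Sum>m\<le>N. cmod (d m * (z - \<zeta>)^m))" unfolding h_def by (rule norm_sum)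
          also have "\<dots> \<le> (\<Sum>m\<le>N. C1 * T^m)"
          proof (rule sum_mono)
            fix m
            have "cmod (d m * (z - \<zeta>)^m) = cmod (d m) * cmod (z - \<zeta>)^m" by (simp add: norm_mult norm_power)
            also have "\<dots> \<le> (C1 / R^m) * 2^m"
              using dB[of m] z2 R C1 by (intro mult_mono power_mono) auto
            also have "\<dots> = C1 * T^m" unfolding T_def by (simp add: power_divide)
            finally show "cmod (d m * (z - \<zeta>)^m) \<le> C1 * T^m" .
          qed
          also have "\<dots> = C1 * (\<Sum>m\<le>N. T^m)" by (simp add: sum_distrib_left)
          also have "\<dots> \<le> C1 * (2*T)^N" using C1 sum_bound[OF T(1), of N] by simp
          finally show "cmod (h z) \<le> C1 * (2*T)^N" .
        qed
        have "p k h \<le> Ck * (C1 * (2*T)^N)" using HK[OF hh _ hK] C1 T by simp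
        also have "(2*T)^N = (2^N) powr \<mu>" unfolding \<mu>_def by (rule pow_powr[OF T(2)])
        also have "(2^N) powr \<mu> \<le> (2*r) powr \<mu>" using N \<mu> by (intro powr_mono2) auto
        also have "(2*r) powr \<mu> = 2 powr \<mu> * r powr \<mu>" by (simp add: powr_mult)
        finally have "p k h \<le> Ck * (C1 * (2 powr \<mu> * r powr \<mu>))" using Ck C1 by (simp add: mult_left_mono)
        also have "\<dots> = (Ck * C1 * 2 powr \<mu>) * r powr \<mu>" by simp
        also have "\<dots> \<le> r * r powr \<mu>" using r0 rr by (intro mult_right_mono) auto
        also have "\<dots> = r powr lam" unfolding lam_def using r by (simp add: powr_add)
        finally have "p k h \<le> r powr lam" .
        then show ?thesis using feq gb by (intro bexI[OF _ gh] bexI[OF _ hh] conjI)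
      qed
    qed
  qed
  show ?thesis unfolding omega_tilde_at_wrt_def
    apply (rule exI[of _ eps], rule conjI[OF eps], rule conjI[OF cbe])
    apply (rule exI[of _ k1], rule exI[of _ lam], rule conjI[OF lam])
    by (rule main)
qed


theorem mainTheorem6:
  shows "(\<forall>\<zeta>\<in>ball 0 1 - {0}. \<forall>p. fund_norm_sys (ball 0 1 - {0}) p \<longrightarrow>
            omega_tilde_at_wrt (ball 0 1 - {0}) \<zeta> p) \<and>
         (\<forall>p. fund_seminorm_sys (ball 0 1 - {0}) p \<longrightarrow>
            \<not> omega_tilde_wrt (ball 0 1 - {0}) p)"
proof (rule conjI)
  show "\<forall>\<zeta>\<in>ball 0 1 - {0}. \<forall>p. fund_norm_sys (ball 0 1 - {0}) p \<longrightarrow>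
            omega_tilde_at_wrt (ball 0 1 - {0}) \<zeta> p"
  proof (intro ballI allI impI)
    fix \<zeta> :: complex and p assume z: "\<zeta> \<in> ball 0 1 - {0}" and fn: "fund_norm_sys (ball 0 1 - {0}) p"
    have "fund_seminorm_sys (ball 0 1 - {0}) p" using fn unfolding fund_norm_sys_def by (elim conjE)
    then show "omega_tilde_at_wrt (ball 0 1 - {0}) \<zeta> p" by (rule part1[OF _ refl z])
  qed
  show "\<forall>p. fund_seminorm_sys (ball 0 1 - {0}) p \<longrightarrow> \<not> omega_tilde_wrt (ball 0 1 - {0}) p"
  proof (intro allI impI)
    fix p assume "fund_seminorm_sys (ball 0 1 - {0}) p"
    then show "\<not> omega_tilde_wrt (ball 0 1 - {0}) p" by (rule part2[OF _ refl])
  qed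
qed

end
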